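(* Let $f:\{0,1\}^n\to\{-1,1\}$ and put $\eta=\mathbb E_{x,y}\sum_{\alpha,\beta}\hat{f_x}^2(\alpha)\hat{f_y}^2(\beta)\widehat{f_{x+y}}^2(\alpha+\beta)$ and $\delta=\eta/6$. Let $\phi:\{0,1\}^n\to\{0,1\}^n$ be a random map whose values $\phi(x)$, $x\in\{0,1\}^n$, are independent with $\Pr(\phi(x)=\alpha)=\hat{f_x}^2(\alpha)$. Define $$L(\phi)=\Pr_{x,y}\Big(\phi(x)+\phi(y)=\phi(x+y),\ \hat{f_x}^2(\phi(x))\ge\delta,\ \hat{f_y}^2(\phi(y))\ge\delta,\ \widehat{f_{x+y}}^2(\phi(x+y))\ge\delta\Big),$$ with $x,y$ independent uniform. Then $\mathbb E_\phi L(\phi)\ge\eta/2$.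
   Context: $\{0,1\}^n$ is identified with $\mathbb F_2^n$. $\hat h(\alpha)=\mathbb E_z h(z)(-1)^{\langle\alpha,z\rangle}$; $f_y(x)=f(x)f(x+y)$. (By Parseval, $\sum_\alpha\hat{f_x}^2(\alpha)=1$, so the distribution of $\phi(x)$ is well defined.) *)

theory Defs
  imports Complex_Main "HOL-Library.FuncSet"
begin

text \<open>The cube {0,1}^n = F_2^n is represented by subsets of {0..<n} (indicator sets);
  addition is symmetric difference and the inner product is the parity of card (a \<inter> z).\<close>

definition cube :: "nat \<Rightarrow> nat set set" where
  "cube n = Pow {..<n}"

definition vadd :: "nat set \<Rightarrow> nat set \<Rightarrow> nat set" where
  "vadd a b = (a - b) \<union> (b - a)"

definition fourier :: "nat \<Rightarrow> (nat set \<Rightarrow> real) \<Rightarrow> nat set \<Rightarrow> real" where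
  "fourier n h \<alpha> = (\<Sum>z\<in>cube n. h z * (-1) ^ card (\<alpha> \<inter> z)) / 2 ^ n"

definition shiftprod :: "(nat set \<Rightarrow> real) \<Rightarrow> nat set \<Rightarrow> nat set \<Rightarrow> real" where
  "shiftprod f y x = f x * f (vadd x y)"

definition W :: "nat \<Rightarrow> (nat set \<Rightarrow> real) \<Rightarrow> nat set \<Rightarrow> nat set \<Rightarrow> real" where
  "W n f x \<alpha> = (fourier n (shiftprod f x) \<alpha>) ^ 2"

definition eta :: "nat \<Rightarrow> (nat set \<Rightarrow> real) \<Rightarrow> real" where
  "eta n f = (\<Sum>x\<in>cube n. \<Sum>y\<in>cube n. \<Sum>\<alpha>\<in>cube n. \<Sum>\<beta>\<in>cube n.
      W n f x \<alpha> * W n f y \<beta> * W n f (vadd x y) (vadd \<alpha> \<beta>)) / 4 ^ n"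

definition Lphi :: "nat \<Rightarrow> (nat set \<Rightarrow> real) \<Rightarrow> real \<Rightarrow> (nat set \<Rightarrow> nat set) \<Rightarrow> real" where
  "Lphi n f \<delta> \<phi> = real (card {(x, y). x \<in> cube n \<and> y \<in> cube n \<and>
      vadd (\<phi> x) (\<phi> y) = \<phi> (vadd x y) \<and>
      W n f x (\<phi> x) \<ge> \<delta> \<and> W n f y (\<phi> y) \<ge> \<delta> \<and> W n f (vadd x y) (\<phi> (vadd x y)) \<ge> \<delta>})
      / 4 ^ n"

text \<open>Expectation over the random map \<phi> with independent values, Pr(\<phi> x = \<alpha>) = W n f x \<alpha>.\<close>
definition ELphi :: "nat \<Rightarrow> (nat set \<Rightarrow> real) \<Rightarrow> real \<Rightarrow> real" where
  "ELphi n f \<delta> = (\<Sum>\<phi>\<in>(cube n \<rightarrow>\<^sub>E cube n).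
      (\<Prod>x\<in>cube n. W n f x (\<phi> x)) * Lphi n f \<delta> \<phi>)"

end

theory Submission
  imports Defs
begin

lemma cube_finite: "finite (cube n)" by (simp add: cube_def)

lemma vadd_cube: "a \<in> cube n \<Longrightarrow> b \<in> cube n \<Longrightarrow> vadd a b \<in> cube n"
  by (auto simp: cube_def vadd_def)

lemma vadd_empty[simp]: "vadd a {} = a" "vadd {} a = a" by (auto simp: vadd_def)
lemma vadd_self[simp]: "vadd a a = {}" by (auto simp: vadd_def)
lemma vadd_comm: "vadd a b = vadd b a" by (auto simp: vadd_def)
lemma vadd_cancel[simp]: "vadd (vadd a b) b = a" by (auto simp: vadd_def)
lemma vadd_eq_empty: "vadd a b = {} \<longleftrightarrow> a = b" by (auto simp: vadd_def)

lemma sum_vadd_shift: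
  assumes "\<beta> \<in> cube n"
  shows "(\<Sum>\<alpha>\<in>cube n. g (vadd \<alpha> \<beta>)) = (\<Sum>\<alpha>\<in>cube n. g \<alpha>)"
  by (rule sum.reindex_bij_witness[where i="\<lambda>a. vadd a \<beta>" and j="\<lambda>a. vadd a \<beta>"])
     (auto simp: vadd_cube assms)

lemma char_sum:
  assumes "finite A"
  shows "(\<Sum>\<alpha>\<in>Pow A. (-1::real) ^ card (\<alpha> \<inter> z)) = (if A \<inter> z = {} then 2 ^ card A else 0)"
  using assms
proof (induction A rule: finite_induct)
  case empty
  then show ?case by simp
next
  case (insert a A)
  have disj: "Pow A \<inter> insert a ` Pow A = {}" using insert by auto
  have inj: "inj_on (insert a) (Pow A)" using insert
    by (smt (verit, ccfv_SIG) PowD inj_on_def insert_ident subset_iff)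
  have c: "card (insert a \<alpha> \<inter> z) = (if a \<in> z then Suc (card (\<alpha> \<inter> z)) else card (\<alpha> \<inter> z))"
    if "\<alpha> \<in> Pow A" for \<alpha>
  proof -
    have fa: "finite \<alpha>" using that insert(1) finite_subset by auto
    have "a \<notin> \<alpha>" using that insert by auto
    then show ?thesis using fa by (auto simp: Int_insert_left)
  qed
  have "(\<Sum>\<alpha>\<in>Pow (insert a A). (-1::real) ^ card (\<alpha> \<inter> z))
      = (\<Sum>\<alpha>\<in>Pow A. (-1::real) ^ card (\<alpha> \<inter> z)) + (\<Sum>\<alpha>\<in>insert a ` Pow A. (-1::real) ^ card (\<alpha> \<inter> z))"
    unfolding Pow_insert using disj insert(1) by (intro sum.union_disjoint) auto
  also have "(\<Sum>\<alpha>\<in>insert a ` Pow A. (-1::real) ^ card (\<alpha> \<inter> z))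
      = (\<Sum>\<alpha>\<in>Pow A. (-1::real) ^ card (insert a \<alpha> \<inter> z))"
    using inj by (simp add: sum.reindex)
  also have "\<dots> = (\<Sum>\<alpha>\<in>Pow A. (if a \<in> z then -1 else 1) * (-1::real) ^ card (\<alpha> \<inter> z))"
    by (intro sum.cong) (auto simp: c)
  finally show ?case using insert
    by (auto simp: sum_distrib_left[symmetric])
qed

lemma char_mult:
  assumes "finite \<alpha>"
  shows "(-1::real) ^ card (\<alpha> \<inter> z) * (-1) ^ card (\<alpha> \<inter> z') = (-1) ^ card (\<alpha> \<inter> vadd z z')"
proof -
  have e1: "card (\<alpha> \<inter> z) = card (\<alpha> \<inter> (z - z')) + card (\<alpha> \<inter> z \<inter> z')"
    using assms by (subst card_Un_disjoint[symmetric]) (auto intro: arg_cong[where f=card])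
  have e2: "card (\<alpha> \<inter> z') = card (\<alpha> \<inter> (z' - z)) + card (\<alpha> \<inter> z \<inter> z')"
    using assms by (subst card_Un_disjoint[symmetric]) (auto intro: arg_cong[where f=card])
  have e3: "card (\<alpha> \<inter> vadd z z') = card (\<alpha> \<inter> (z - z')) + card (\<alpha> \<inter> (z' - z))"
    using assms unfolding vadd_def by (subst card_Un_disjoint[symmetric]) (auto intro: arg_cong[where f=card])
  define a where "a = card (\<alpha> \<inter> (z - z'))"
  define b where "b = card (\<alpha> \<inter> (z' - z))"
  define c where "c = card (\<alpha> \<inter> z \<inter> z')"
  have "(-1::real) ^ (a + c) * (-1) ^ (b + c) = (-1) ^ (a + b) * ((-1) ^ 2) ^ c"
  proof -
    have "a + c + (b + c) = (a + b) + 2 * c" by simp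
    then show ?thesis by (simp only: power_add[symmetric] power_mult[symmetric])
  qed
  then show ?thesis unfolding e1 e2 e3 a_def[symmetric] b_def[symmetric] c_def[symmetric] by simp
qed

lemma char_sum_cube:
  assumes "z \<in> cube n" "z' \<in> cube n"
  shows "(\<Sum>\<alpha>\<in>cube n. (-1::real) ^ card (\<alpha> \<inter> z) * (-1) ^ card (\<alpha> \<inter> z'))
     = (if z = z' then 2 ^ n else 0)"
proof -
  have "(\<Sum>\<alpha>\<in>cube n. (-1::real) ^ card (\<alpha> \<inter> z) * (-1) ^ card (\<alpha> \<inter> z'))
      = (\<Sum>\<alpha>\<in>cube n. (-1::real) ^ card (\<alpha> \<inter> vadd z z'))"
    by (intro sum.cong refl char_mult) (auto simp: cube_def finite_subset)
  also have "\<dots> = (if {..<n} \<inter> vadd z z' = {} then 2 ^ n else 0)"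
    unfolding cube_def by (subst char_sum) auto
  also have "({..<n} \<inter> vadd z z' = {}) = (z = z')"
    using assms by (auto simp: cube_def vadd_def)
  finally show ?thesis .
qed

lemma parseval:
  "(\<Sum>\<alpha>\<in>cube n. (fourier n h \<alpha>)^2) = (\<Sum>z\<in>cube n. (h z)^2) / 2 ^ n"
proof -
  have "(\<Sum>\<alpha>\<in>cube n. (fourier n h \<alpha>)^2)
     = (\<Sum>\<alpha>\<in>cube n. \<Sum>z\<in>cube n. \<Sum>z'\<in>cube n.
          h z * h z' * ((-1) ^ card (\<alpha> \<inter> z) * (-1) ^ card (\<alpha> \<inter> z'))) / 4 ^ n"
    unfolding fourier_def power2_eq_square sum_divide_distrib[symmetric]
    by (simp add: sum_product sum_divide_distrib algebra_simps power_mult_distrib[symmetric])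
  also have "\<dots> = (\<Sum>z\<in>cube n. \<Sum>z'\<in>cube n. h z * h z' *
      (\<Sum>\<alpha>\<in>cube n. (-1) ^ card (\<alpha> \<inter> z) * (-1) ^ card (\<alpha> \<inter> z'))) / 4 ^ n"
  proof -
    have sw: "(\<Sum>\<alpha>\<in>cube n. \<Sum>z\<in>cube n. \<Sum>z'\<in>cube n. F \<alpha> z z')
       = (\<Sum>z\<in>cube n. \<Sum>z'\<in>cube n. \<Sum>\<alpha>\<in>cube n. F \<alpha> z z' :: real)" for F
    proof -
      have "(\<Sum>\<alpha>\<in>cube n. \<Sum>z\<in>cube n. \<Sum>z'\<in>cube n. F \<alpha> z z')
         = (\<Sum>z\<in>cube n. \<Sum>\<alpha>\<in>cube n. \<Sum>z'\<in>cube n. F \<alpha> z z')"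
        by (rule sum.swap)
      also have "\<dots> = (\<Sum>z\<in>cube n. \<Sum>z'\<in>cube n. \<Sum>\<alpha>\<in>cube n. F \<alpha> z z')"
        by (rule sum.cong[OF refl], rule sum.swap)
      finally show ?thesis .
    qed
    show ?thesis
      using sw[of "\<lambda>\<alpha> z z'. h z * h z' * ((-1) ^ card (\<alpha> \<inter> z) * (-1) ^ card (\<alpha> \<inter> z'))"]
      by (simp add: sum_distrib_left)
  qed
  also have "\<dots> = (\<Sum>z\<in>cube n. \<Sum>z'\<in>cube n. h z * h z' * (if z = z' then 2 ^ n else 0)) / 4 ^ n"
    by (simp add: char_sum_cube)
  also have "\<dots> = (\<Sum>z\<in>cube n. h z * h z * 2 ^ n) / 4 ^ n"
  proof -
    have "(\<Sum>z'\<in>cube n. h z * h z' * (if z = z' then 2 ^ n else 0)) = h z * h z * 2 ^ n"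
      if "z \<in> cube n" for z :: "nat set"
    proof -
      have "(\<Sum>z'\<in>cube n. h z * h z' * (if z = z' then 2 ^ n else 0))
         = (\<Sum>z'\<in>cube n. if z = z' then h z * h z' * 2 ^ n else (0::real))"
        by (intro sum.cong) auto
      also have "\<dots> = h z * h z * 2 ^ n" using that cube_finite by simp
      finally show ?thesis .
    qed
    then show ?thesis by (intro arg_cong[where f="\<lambda>x. x / 4 ^ n"] sum.cong) auto
  qed
  also have "\<dots> = (\<Sum>z\<in>cube n. (h z)^2) / 2 ^ n"
  proof -
    have f: "(4::real)^n = 2^n*2^n" by (simp add: power_mult_distrib[symmetric])
    have "(\<Sum>z\<in>cube n. h z * h z * 2 ^ n) = (\<Sum>z\<in>cube n. (h z)^2) * (2::real) ^ n"
      by (simp add: sum_distrib_right power2_eq_square)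
    then show ?thesis unfolding f by simp
  qed
  finally show ?thesis .
qed

lemma card_cube: "card (cube n) = 2 ^ n"
  by (simp add: cube_def card_Pow)

lemma W_nonneg: "0 \<le> W n f x \<alpha>" by (simp add: W_def)

lemma W_sum:
  assumes hf: "\<forall>x\<in>cube n. f x = 1 \<or> f x = -1" and x: "x \<in> cube n"
  shows "(\<Sum>\<alpha>\<in>cube n. W n f x \<alpha>) = 1"
proof -
  have "(\<Sum>z\<in>cube n. (shiftprod f x z)^2) = (\<Sum>z\<in>cube n. 1)"
  proof (intro sum.cong refl)
    fix z assume z: "z \<in> cube n"
    then have "vadd z x \<in> cube n" using x vadd_cube by blast
    then have "f z = 1 \<or> f z = -1" "f (vadd z x) = 1 \<or> f (vadd z x) = -1" using hf z by auto
    then show "(shiftprod f x z)^2 = 1" unfolding shiftprod_def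
      by (auto simp: power2_eq_square)
  qed
  then show ?thesis unfolding W_def parseval by (simp add: card_cube)
qed

lemma W_le1:
  assumes hf: "\<forall>x\<in>cube n. f x = 1 \<or> f x = -1" and x: "x \<in> cube n" and a: "\<alpha> \<in> cube n"
  shows "W n f x \<alpha> \<le> 1"
  using member_le_sum[of \<alpha> "cube n" "W n f x"] W_sum[OF hf x] a W_nonneg cube_finite by auto

lemma W_shift_sum:
  assumes hf: "\<forall>x\<in>cube n. f x = 1 \<or> f x = -1" and x: "x \<in> cube n" and b: "\<beta> \<in> cube n"
  shows "(\<Sum>\<alpha>\<in>cube n. W n f x (vadd \<alpha> \<beta>)) = 1"
  using sum_vadd_shift[OF b, of "W n f x"] W_sum[OF hf x] by simp

lemma W_shift_sum':
  assumes hf: "\<forall>x\<in>cube n. f x = 1 \<or> f x = -1" and x: "x \<in> cube n" and b: "\<beta> \<in> cube n"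
  shows "(\<Sum>\<alpha>\<in>cube n. W n f x (vadd \<beta> \<alpha>)) = 1"
  using W_shift_sum[OF assms] by (simp add: vadd_comm)

lemma empty_cube: "{} \<in> cube n" by (simp add: cube_def)

lemma W00:
  assumes hf: "\<forall>x\<in>cube n. f x = 1 \<or> f x = -1"
  shows "W n f {} {} = 1"
proof -
  have "(\<Sum>z\<in>cube n. shiftprod f {} z * (-1) ^ card ({} \<inter> z)) = (\<Sum>z\<in>cube n. 1)"
    using hf by (intro sum.cong refl) (auto simp: shiftprod_def)
  then show ?thesis unfolding W_def fourier_def by (simp add: card_cube)
qed

lemma W0:
  assumes hf: "\<forall>x\<in>cube n. f x = 1 \<or> f x = -1" and g: "\<gamma> \<in> cube n" "\<gamma> \<noteq> {}"
  shows "W n f {} \<gamma> = 0"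
proof -
  have "(\<Sum>\<alpha>\<in>cube n. W n f {} \<alpha>) = W n f {} {} + (\<Sum>\<alpha>\<in>cube n - {{}}. W n f {} \<alpha>)"
    using cube_finite empty_cube by (simp add: sum.remove)
  then have "(\<Sum>\<alpha>\<in>cube n - {{}}. W n f {} \<alpha>) = 0"
    using W_sum[OF hf empty_cube] W00[OF hf] by simp
  then show ?thesis using sum_nonneg_eq_0_iff[of "cube n - {{}}" "W n f {}"] cube_finite W_nonneg g
    by auto
qed

lemma prod_ind:
  "finite S \<Longrightarrow> (\<Prod>z\<in>S. (if P z then 1 else 0::real)) = (if \<forall>z\<in>S. P z then 1 else 0)"
  by (induction S rule: finite_induct) auto

lemma J_formula:
  fixes w :: "'a \<Rightarrow> 'b \<Rightarrow> real"
  assumes "finite S" "finite C"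
  shows "(\<Sum>\<phi>\<in>S \<rightarrow>\<^sub>E C. (\<Prod>z\<in>S. w z (\<phi> z)) * (if \<forall>z\<in>S. Q z (\<phi> z) then 1 else 0))
       = (\<Prod>z\<in>S. \<Sum>v\<in>C. w z v * (if Q z v then 1 else 0))"
  by (subst prod_sum_PiE) (use assms in \<open>auto simp: prod.distrib prod_ind intro!: sum.cong\<close>)

lemma sum_ind: "finite C \<Longrightarrow> (\<Sum>v\<in>C. w v * (if Q v then 1 else 0::real)) = (\<Sum>v\<in>{v\<in>C. Q v}. w v)"
  by (simp add: sum.inter_filter[symmetric] if_distrib cong: if_cong)

lemma J_bound:
  assumes hf: "\<forall>x\<in>cube n. f x = 1 \<or> f x = -1"
    and x: "x \<in> cube n" and y: "y \<in> cube n" and a: "\<alpha> \<in> cube n" and b: "\<beta> \<in> cube n"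
  shows "W n f x \<alpha> * W n f y \<beta> * W n f (vadd x y) (vadd \<alpha> \<beta>) \<le>
    (\<Sum>\<phi>\<in>cube n \<rightarrow>\<^sub>E cube n. (\<Prod>z\<in>cube n. W n f z (\<phi> z)) *
       (if \<phi> x = \<alpha> \<and> \<phi> y = \<beta> \<and> \<phi> (vadd x y) = vadd \<alpha> \<beta> then 1 else 0))"
proof -
  define s where "s = vadd x y"
  define \<gamma> where "\<gamma> = vadd \<alpha> \<beta>"
  have s: "s \<in> cube n" and g: "\<gamma> \<in> cube n" using x y a b vadd_cube s_def \<gamma>_def by auto
  define Q where "Q z v = ((z = x \<longrightarrow> v = \<alpha>) \<and> (z = y \<longrightarrow> v = \<beta>) \<and> (z = s \<longrightarrow> v = \<gamma>))" for z v
  define q where "q z = (\<Sum>v\<in>{v\<in>cube n. Q z v}. W n f z v)" for z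
  have qnn: "0 \<le> q z" for z unfolding q_def by (intro sum_nonneg W_nonneg)
  have "(\<Sum>\<phi>\<in>cube n \<rightarrow>\<^sub>E cube n. (\<Prod>z\<in>cube n. W n f z (\<phi> z)) *
       (if \<phi> x = \<alpha> \<and> \<phi> y = \<beta> \<and> \<phi> s = \<gamma> then 1 else 0))
     = (\<Sum>\<phi>\<in>cube n \<rightarrow>\<^sub>E cube n. (\<Prod>z\<in>cube n. W n f z (\<phi> z)) *
       (if \<forall>z\<in>cube n. Q z (\<phi> z) then 1 else 0))"
    using x y s by (intro sum.cong refl) (auto simp: Q_def)
  also have "\<dots> = (\<Prod>z\<in>cube n. q z)"
  proof -
    note J = J_formula[OF cube_finite cube_finite, where w="W n f" and Q=Q]
    have "(\<Sum>v\<in>cube n. W n f z v * (if Q z v then 1 else 0)) = q z" for z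
      unfolding q_def by (rule sum_ind[OF cube_finite])
    then show ?thesis using J by simp
  qed
  also have "\<dots> = (\<Prod>z\<in>{x, y, s}. q z)"
  proof (rule prod.mono_neutral_right)
    show "finite (cube n)" by (rule cube_finite)
    show "{x, y, s} \<subseteq> cube n" using x y s by auto
    show "\<forall>z\<in>cube n - {x, y, s}. q z = 1"
    proof
      fix z assume z: "z \<in> cube n - {x, y, s}"
      then have "{v\<in>cube n. Q z v} = cube n" by (auto simp: Q_def)
      then show "q z = 1" unfolding q_def using W_sum[OF hf] z by auto
    qed
  qed
  finally have eq: "(\<Sum>\<phi>\<in>cube n \<rightarrow>\<^sub>E cube n. (\<Prod>z\<in>cube n. W n f z (\<phi> z)) *
       (if \<phi> x = \<alpha> \<and> \<phi> y = \<beta> \<and> \<phi> s = \<gamma> then 1 else 0)) = (\<Prod>z\<in>{x, y, s}. q z)" .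
  have P0: "0 \<le> (\<Prod>z\<in>{x, y, s}. q z)" by (intro prod_nonneg qnn)
  have sing: "a \<in> cube n \<Longrightarrow> {v\<in>cube n. v = a} = {a}" for a by auto
  have W0': "W n f {} v = 0" if "v \<in> cube n" "v \<noteq> {}" for v using W0[OF hf that] .
  note W1 = W00[OF hf]
  have le1: "W n f z v \<le> 1" if "z \<in> cube n" "v \<in> cube n" for z v using W_le1[OF hf that] .
  have sq: "0 \<le> t \<Longrightarrow> t \<le> 1 \<Longrightarrow> t * t \<le> t" for t :: real by (simp add: mult_left_le)
  have main: "W n f x \<alpha> * W n f y \<beta> * W n f s \<gamma> \<le> (\<Prod>z\<in>{x, y, s}. q z)"
  proof (cases "x = {}")
    case x0: True
    show ?thesis
    proof (cases "\<alpha> = {}")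
      case False
      then show ?thesis using x0 W0'[OF a] P0 by simp
    next
      case a0: True
      have sy: "s = y" "\<gamma> = \<beta>" using x0 a0 by (auto simp: s_def \<gamma>_def)
      show ?thesis
      proof (cases "y = {}")
        case y0: True
        show ?thesis
        proof (cases "\<beta> = {}")
          case False
          then show ?thesis using y0 W0'[OF b] P0 by simp
        next
          case True
          have "q {} = 1" using x0 y0 sy a0 True W1 empty_cube
            by (simp add: q_def Q_def sing)
          then show ?thesis using x0 y0 sy a0 True W1 by simp
        qed
      next
        case yn: False
        have "q {} = 1" using x0 yn sy a0 W1 empty_cube
          by (simp add: q_def Q_def sing)
        moreover have "q y = W n f y \<beta>" using x0 yn sy b
          by (simp add: q_def Q_def sing)
        ultimately show ?thesis using x0 yn sy a0 W1 sq[OF W_nonneg le1[OF y b]] yn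
          by (simp add: mult.assoc)
      qed
    qed
  next
    case xn: False
    show ?thesis
    proof (cases "y = {}")
      case y0: True
      show ?thesis
      proof (cases "\<beta> = {}")
        case False
        then show ?thesis using y0 W0'[OF b] P0 by simp
      next
        case b0: True
        have sx: "s = x" "\<gamma> = \<alpha>" using y0 b0 by (auto simp: s_def \<gamma>_def)
        have "q {} = 1" using xn y0 sx b0 W1 empty_cube
          by (simp add: q_def Q_def sing)
        moreover have "q x = W n f x \<alpha>" using xn y0 sx a
          by (simp add: q_def Q_def sing)
        ultimately show ?thesis using xn y0 sx b0 W1 sq[OF W_nonneg le1[OF x a]]
          by (simp add: insert_commute)
      qed
    next
      case yn: False
      show ?thesis
      proof (cases "x = y")
        case xy: True
        have s0: "s = {}" using xy by (simp add: s_def)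
        show ?thesis
        proof (cases "\<alpha> = \<beta>")
          case False
          then have "\<gamma> \<noteq> {}" by (simp add: \<gamma>_def vadd_eq_empty)
          then show ?thesis using s0 W0'[OF g] P0 by simp
        next
          case ab: True
          have g0: "\<gamma> = {}" using ab by (simp add: \<gamma>_def)
          have "q {} = 1" using xn xy s0 g0 W1 empty_cube
            by (simp add: q_def Q_def sing)
          moreover have "q x = W n f x \<alpha>" using xn xy s0 ab a
            by (simp add: q_def Q_def sing)
          ultimately show ?thesis using xn xy s0 g0 ab W1 sq[OF W_nonneg le1[OF x a]]
            by (simp add: insert_commute)
        qed
      next
        case xy: False
        have d: "s \<noteq> x" "s \<noteq> y" "s \<noteq> {}" using xn yn xy
          by (auto simp: s_def vadd_def)
        have "q x = W n f x \<alpha>" "q y = W n f y \<beta>" "q s = W n f s \<gamma>"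
          using xy d a b g by (auto simp: q_def Q_def sing)
        then show ?thesis using xy d by simp
      qed
    qed
  qed
  show ?thesis using main eq unfolding s_def \<gamma>_def by simp
qed

lemma card_filter_sum: "finite A \<Longrightarrow> real (card {p\<in>A. P p}) = (\<Sum>p\<in>A. if P p then 1 else 0)"
  by (simp add: sum.inter_filter[symmetric])

lemma Lphi_sum:
  "Lphi n f \<delta> \<phi> = (\<Sum>x\<in>cube n. \<Sum>y\<in>cube n. if vadd (\<phi> x) (\<phi> y) = \<phi> (vadd x y) \<and>
      W n f x (\<phi> x) \<ge> \<delta> \<and> W n f y (\<phi> y) \<ge> \<delta> \<and> W n f (vadd x y) (\<phi> (vadd x y)) \<ge> \<delta>
      then 1 else 0) / 4 ^ n"
proof -
  have "{(x, y). x \<in> cube n \<and> y \<in> cube n \<and>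
      vadd (\<phi> x) (\<phi> y) = \<phi> (vadd x y) \<and>
      W n f x (\<phi> x) \<ge> \<delta> \<and> W n f y (\<phi> y) \<ge> \<delta> \<and> W n f (vadd x y) (\<phi> (vadd x y)) \<ge> \<delta>}
    = {p \<in> cube n \<times> cube n. case p of (x, y) \<Rightarrow> vadd (\<phi> x) (\<phi> y) = \<phi> (vadd x y) \<and>
      W n f x (\<phi> x) \<ge> \<delta> \<and> W n f y (\<phi> y) \<ge> \<delta> \<and> W n f (vadd x y) (\<phi> (vadd x y)) \<ge> \<delta>}"
    by auto
  then show ?thesis unfolding Lphi_def
    by (simp add: card_filter_sum cube_finite sum.cartesian_product case_prod_beta)
qed

lemma ind_decomp:
  assumes "\<phi> x \<in> cube n" "\<phi> y \<in> cube n"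
  shows "(if vadd (\<phi> x) (\<phi> y) = \<phi> s \<and> W n f x (\<phi> x) \<ge> \<delta> \<and> W n f y (\<phi> y) \<ge> \<delta> \<and> W n f s (\<phi> s) \<ge> \<delta>
      then 1 else 0) =
    (\<Sum>\<alpha>\<in>cube n. \<Sum>\<beta>\<in>cube n.
      (if W n f x \<alpha> \<ge> \<delta> \<and> W n f y \<beta> \<ge> \<delta> \<and> W n f s (vadd \<alpha> \<beta>) \<ge> \<delta> then 1 else 0) *
      (if \<phi> x = \<alpha> \<and> \<phi> y = \<beta> \<and> \<phi> s = vadd \<alpha> \<beta> then 1 else (0::real)))"
proof -
  have "(\<Sum>\<alpha>\<in>cube n. \<Sum>\<beta>\<in>cube n.
      (if W n f x \<alpha> \<ge> \<delta> \<and> W n f y \<beta> \<ge> \<delta> \<and> W n f s (vadd \<alpha> \<beta>) \<ge> \<delta> then 1 else 0) *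
      (if \<phi> x = \<alpha> \<and> \<phi> y = \<beta> \<and> \<phi> s = vadd \<alpha> \<beta> then 1 else (0::real)))
    = (\<Sum>\<alpha>\<in>cube n. if \<alpha> = \<phi> x then (\<Sum>\<beta>\<in>cube n. if \<beta> = \<phi> y then
      (if W n f x \<alpha> \<ge> \<delta> \<and> W n f y \<beta> \<ge> \<delta> \<and> W n f s (vadd \<alpha> \<beta>) \<ge> \<delta> \<and> \<phi> s = vadd \<alpha> \<beta> then 1 else 0)
       else 0) else 0)"
    by (intro sum.cong refl) (auto intro!: sum.cong sum.neutral)
  also have "\<dots> = (if vadd (\<phi> x) (\<phi> y) = \<phi> s \<and> W n f x (\<phi> x) \<ge> \<delta> \<and> W n f y (\<phi> y) \<ge> \<delta> \<and> W n f s (\<phi> s) \<ge> \<delta>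
      then 1 else 0)"
    using assms cube_finite by (auto simp: sum.delta')
  finally show ?thesis by simp
qed

theorem lemma6p7:
  fixes n :: nat and f :: "nat set \<Rightarrow> real"
  assumes "\<forall>x\<in>cube n. f x = 1 \<or> f x = -1"
  shows "ELphi n f (eta n f / 6) \<ge> eta n f / 2"
proof -
  note hf = assms
  define \<delta> where "\<delta> = eta n f / 6"
  define C where "C = cube n"
  define PE where "PE = C \<rightarrow>\<^sub>E C"
  define c where "c x y \<alpha> \<beta> = (if W n f x \<alpha> \<ge> \<delta> \<and> W n f y \<beta> \<ge> \<delta> \<and> W n f (vadd x y) (vadd \<alpha> \<beta>) \<ge> \<delta> then 1 else 0::real)" for x y \<alpha> \<beta>
  define I where "I x y \<alpha> \<beta> \<phi> = (if \<phi> x = \<alpha> \<and> \<phi> y = \<beta> \<and> \<phi> (vadd x y) = vadd \<alpha> \<beta> then 1 else 0::real)" for x y \<alpha> \<beta> \<phi>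
  define P where "P \<phi> = (\<Prod>z\<in>C. W n f z (\<phi> z))" for \<phi>
  define T where "T x y \<alpha> \<beta> = W n f x \<alpha> * W n f y \<beta> * W n f (vadd x y) (vadd \<alpha> \<beta>)" for x y \<alpha> \<beta>
  define J where "J x y \<alpha> \<beta> = (\<Sum>\<phi>\<in>PE. P \<phi> * I x y \<alpha> \<beta> \<phi>)" for x y \<alpha> \<beta>
  have fC: "finite C" by (simp add: C_def cube_finite)
  have eta_nn: "0 \<le> eta n f" unfolding eta_def
    by (intro divide_nonneg_pos sum_nonneg mult_nonneg_nonneg W_nonneg) auto
  have d_nn: "0 \<le> \<delta>" using eta_nn by (simp add: \<delta>_def)
  have L: "Lphi n f \<delta> \<phi> = (\<Sum>x\<in>C. \<Sum>y\<in>C. \<Sum>\<alpha>\<in>C. \<Sum>\<beta>\<in>C. c x y \<alpha> \<beta> * I x y \<alpha> \<beta> \<phi>) / 4 ^ n"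
    if "\<phi> \<in> PE" for \<phi>
    unfolding Lphi_sum C_def
    by (intro arg_cong[where f="\<lambda>t. t / 4 ^ n"] sum.cong refl, subst ind_decomp)
       (use that in \<open>auto simp: PE_def C_def c_def I_def\<close>)
  have "ELphi n f \<delta> = (\<Sum>\<phi>\<in>PE. P \<phi> * ((\<Sum>x\<in>C. \<Sum>y\<in>C. \<Sum>\<alpha>\<in>C. \<Sum>\<beta>\<in>C. c x y \<alpha> \<beta> * I x y \<alpha> \<beta> \<phi>) / 4 ^ n))"
    unfolding ELphi_def P_def PE_def[symmetric] C_def[symmetric] using L by (intro sum.cong) auto
  also have "\<dots> = (\<Sum>\<phi>\<in>PE. \<Sum>x\<in>C. \<Sum>y\<in>C. \<Sum>\<alpha>\<in>C. \<Sum>\<beta>\<in>C. P \<phi> * (c x y \<alpha> \<beta> * I x y \<alpha> \<beta> \<phi>)) / 4 ^ n"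
    by (simp add: sum_distrib_left sum_divide_distrib)
  also have "\<dots> = (\<Sum>x\<in>C. \<Sum>y\<in>C. \<Sum>\<alpha>\<in>C. \<Sum>\<beta>\<in>C. \<Sum>\<phi>\<in>PE. P \<phi> * (c x y \<alpha> \<beta> * I x y \<alpha> \<beta> \<phi>)) / 4 ^ n"
    by (simp only: sum.swap[of _ PE])
  also have "\<dots> = (\<Sum>x\<in>C. \<Sum>y\<in>C. \<Sum>\<alpha>\<in>C. \<Sum>\<beta>\<in>C. c x y \<alpha> \<beta> * J x y \<alpha> \<beta>) / 4 ^ n"
    unfolding J_def by (simp add: sum_distrib_left mult.left_commute)
  finally have E1: "ELphi n f \<delta> = (\<Sum>x\<in>C. \<Sum>y\<in>C. \<Sum>\<alpha>\<in>C. \<Sum>\<beta>\<in>C. c x y \<alpha> \<beta> * J x y \<alpha> \<beta>) / 4 ^ n" .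
  have E2: "(\<Sum>x\<in>C. \<Sum>y\<in>C. \<Sum>\<alpha>\<in>C. \<Sum>\<beta>\<in>C. c x y \<alpha> \<beta> * T x y \<alpha> \<beta>)
      \<le> (\<Sum>x\<in>C. \<Sum>y\<in>C. \<Sum>\<alpha>\<in>C. \<Sum>\<beta>\<in>C. c x y \<alpha> \<beta> * J x y \<alpha> \<beta>)"
  proof (intro sum_mono mult_left_mono)
    fix x y \<alpha> \<beta> assume "x \<in> C" "y \<in> C" "\<alpha> \<in> C" "\<beta> \<in> C"
    then show "T x y \<alpha> \<beta> \<le> J x y \<alpha> \<beta>"
      unfolding T_def J_def P_def I_def PE_def C_def by (rule J_bound[OF hf])
    show "0 \<le> c x y \<alpha> \<beta>" by (simp add: c_def)
  qed
  have E3: "(\<Sum>\<alpha>\<in>C. \<Sum>\<beta>\<in>C. T x y \<alpha> \<beta>) - 3 * \<delta> \<le> (\<Sum>\<alpha>\<in>C. \<Sum>\<beta>\<in>C. c x y \<alpha> \<beta> * T x y \<alpha> \<beta>)"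
    if x: "x \<in> C" and y: "y \<in> C" for x y
  proof -
    define s where "s = vadd x y"
    have s: "s \<in> C" using x y vadd_cube by (simp add: s_def C_def)
    have pw: "T x y \<alpha> \<beta> - c x y \<alpha> \<beta> * T x y \<alpha> \<beta> \<le>
       \<delta> * (W n f y \<beta> * W n f s (vadd \<alpha> \<beta>)) + \<delta> * (W n f x \<alpha> * W n f s (vadd \<alpha> \<beta>))
       + \<delta> * (W n f x \<alpha> * W n f y \<beta>)" for \<alpha> \<beta>
    proof -
      define a where "a = W n f x \<alpha>"
      define b where "b = W n f y \<beta>"
      define g where "g = W n f s (vadd \<alpha> \<beta>)"
      have nn: "0 \<le> a" "0 \<le> b" "0 \<le> g" by (simp_all add: a_def b_def g_def W_nonneg)
      have Tc: "T x y \<alpha> \<beta> = a * b * g" "c x y \<alpha> \<beta> = (if \<delta> \<le> a \<and> \<delta> \<le> b \<and> \<delta> \<le> g then 1 else 0)"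
        by (simp_all add: T_def c_def a_def b_def g_def s_def)
      have r0: "0 \<le> \<delta> * (b * g)" "0 \<le> \<delta> * (a * g)" "0 \<le> \<delta> * (a * b)"
        using nn d_nn by simp_all
      show ?thesis
      proof (cases "\<delta> \<le> a \<and> \<delta> \<le> b \<and> \<delta> \<le> g")
        case True
        then show ?thesis using r0 Tc by (simp add: a_def b_def g_def)
      next
        case False
        then consider "a < \<delta>" | "b < \<delta>" | "g < \<delta>" by linarith
        then have "a * b * g \<le> \<delta> * (b * g) + \<delta> * (a * g) + \<delta> * (a * b)"
        proof cases
          case 1
          have "a * (b * g) \<le> \<delta> * (b * g)" using 1 nn by (intro mult_right_mono) auto
          then show ?thesis using r0 by (simp add: mult.assoc)
        next
          case 2
          have "b * (a * g) \<le> \<delta> * (a * g)" using 2 nn by (intro mult_right_mono) auto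
          then show ?thesis using r0 by (simp add: algebra_simps)
        next
          case 3
          have "g * (a * b) \<le> \<delta> * (a * b)" using 3 nn by (intro mult_right_mono) auto
          then show ?thesis using r0 by (simp add: algebra_simps)
        qed
        moreover have "c x y \<alpha> \<beta> = 0" using False Tc(2) by simp
        ultimately show ?thesis using Tc(1) by (simp add: a_def b_def g_def)
      qed
    qed
    have A1: "(\<Sum>\<alpha>\<in>C. \<Sum>\<beta>\<in>C. W n f y \<beta> * W n f s (vadd \<alpha> \<beta>)) = 1"
    proof -
      have "(\<Sum>\<alpha>\<in>C. \<Sum>\<beta>\<in>C. W n f y \<beta> * W n f s (vadd \<alpha> \<beta>))
          = (\<Sum>\<beta>\<in>C. W n f y \<beta> * (\<Sum>\<alpha>\<in>C. W n f s (vadd \<alpha> \<beta>)))"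
        by (subst sum.swap) (simp add: sum_distrib_left)
      also have "\<dots> = (\<Sum>\<beta>\<in>C. W n f y \<beta>)"
        using W_shift_sum[OF hf] s by (intro sum.cong) (auto simp: C_def)
      finally show ?thesis using W_sum[OF hf] y by (simp add: C_def)
    qed
    have A2: "(\<Sum>\<alpha>\<in>C. \<Sum>\<beta>\<in>C. W n f x \<alpha> * W n f s (vadd \<alpha> \<beta>)) = 1"
    proof -
      have "(\<Sum>\<alpha>\<in>C. \<Sum>\<beta>\<in>C. W n f x \<alpha> * W n f s (vadd \<alpha> \<beta>))
          = (\<Sum>\<alpha>\<in>C. W n f x \<alpha> * (\<Sum>\<beta>\<in>C. W n f s (vadd \<alpha> \<beta>)))"
        by (simp add: sum_distrib_left)
      also have "\<dots> = (\<Sum>\<alpha>\<in>C. W n f x \<alpha>)"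
        using W_shift_sum'[OF hf] s by (intro sum.cong) (auto simp: C_def)
      finally show ?thesis using W_sum[OF hf] x by (simp add: C_def)
    qed
    have A3: "(\<Sum>\<alpha>\<in>C. \<Sum>\<beta>\<in>C. W n f x \<alpha> * W n f y \<beta>) = 1"
      using W_sum[OF hf x[unfolded C_def]] W_sum[OF hf y[unfolded C_def]]
      by (simp add: sum_product[symmetric] C_def)
    have "(\<Sum>\<alpha>\<in>C. \<Sum>\<beta>\<in>C. T x y \<alpha> \<beta> - c x y \<alpha> \<beta> * T x y \<alpha> \<beta>) \<le>
       (\<Sum>\<alpha>\<in>C. \<Sum>\<beta>\<in>C. \<delta> * (W n f y \<beta> * W n f s (vadd \<alpha> \<beta>)) + \<delta> * (W n f x \<alpha> * W n f s (vadd \<alpha> \<beta>))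
       + \<delta> * (W n f x \<alpha> * W n f y \<beta>))"
      by (intro sum_mono pw)
    also have "\<dots> = \<delta> * (\<Sum>\<alpha>\<in>C. \<Sum>\<beta>\<in>C. W n f y \<beta> * W n f s (vadd \<alpha> \<beta>))
       + \<delta> * (\<Sum>\<alpha>\<in>C. \<Sum>\<beta>\<in>C. W n f x \<alpha> * W n f s (vadd \<alpha> \<beta>))
       + \<delta> * (\<Sum>\<alpha>\<in>C. \<Sum>\<beta>\<in>C. W n f x \<alpha> * W n f y \<beta>)"
      by (simp add: sum.distrib sum_distrib_left)
    also have "\<dots> = 3 * \<delta>" using A1 A2 A3 by simp
    finally show ?thesis by (simp add: sum_subtractf)
  qed
  have E4: "(\<Sum>x\<in>C. \<Sum>y\<in>C. (\<Sum>\<alpha>\<in>C. \<Sum>\<beta>\<in>C. T x y \<alpha> \<beta>) - 3 * \<delta>)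
      \<le> (\<Sum>x\<in>C. \<Sum>y\<in>C. \<Sum>\<alpha>\<in>C. \<Sum>\<beta>\<in>C. c x y \<alpha> \<beta> * T x y \<alpha> \<beta>)"
    using E3 by (intro sum_mono) auto
  have E5: "(\<Sum>x\<in>C. \<Sum>y\<in>C. (\<Sum>\<alpha>\<in>C. \<Sum>\<beta>\<in>C. T x y \<alpha> \<beta>) - 3 * \<delta>) / 4 ^ n = eta n f - 3 * \<delta>"
  proof -
    have c4: "real (card C) * real (card C) = 4 ^ n"
      by (simp add: C_def card_cube power_mult_distrib[symmetric])
    show ?thesis unfolding eta_def T_def C_def[symmetric]
      using c4 by (simp add: sum_subtractf diff_divide_distrib c4[symmetric] C_def card_cube)
  qed
  have "eta n f - 3 * \<delta> \<le> ELphi n f \<delta>"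
    using E1 E2 E4 E5 by (smt (verit) divide_right_mono zero_le_power)
  then show ?thesis by (simp add: \<delta>_def)
qed

end
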